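(* The metric $g$ is Killing (i.e. $\mathrm{Ad}$-invariant: $g([x,y],z)=g(x,[y,z])$ for all $x,y,z\in\mathfrak l$) if and only if $(L,\varphi,\xi,\eta,g)$ belongs to $\mathcal{F}_8\oplus\mathcal{F}_{10}$ with $2\lambda=-\nu$, where $\lambda=F_{101}$ and $\nu=F_{011}$. Equivalently, $g$ is Killing iff $C_{12}^0=-C_{01}^2=-C_{02}^1$ and all other $C_{ij}^k$ ($i<j$) vanish.
   Context: Let $L$ be a 3-dimensional real connected Lie group with Lie algebra $\mathfrak l$, and let $\{E_0,E_1,E_2\}$ be a basis of left-invariant vector fields, with $[E_i,E_j]=C_{ij}^kE_k$. Define the left-invariant almost contact structure $(\varphi,\xi,\eta)$ by $\varphi E_0=0$, $\varphi E_1=E_2$, $\varphi E_2=-E_1$, $\xi=E_0$, $\eta(E_0)=1$, $\eta(E_1)=\eta(E_2)=0$, and the left-invariant pseudo-Riemannian metric $g$ by $g(E_0,E_0)=g(E_1,E_1)=-g(E_2,E_2)=1$, $g(E_i,E_j)=0$ for $i\neq j$. Let $\nabla$ be the Levi-Civita connection of $g$, $F(x,y,z)=g((\nabla_x\varphi)y,z)$, and $F_{ijk}=F(E_i,E_j,E_k)$. The manifold belongs to $\mathcal{F}_8$ iff all $F_{ijk}$ vanish except possibly $F_{101}=F_{110}=F_{202}=F_{220}=:\lambda$; to $\mathcal{F}_{10}$ iff all vanish except possibly $F_{011}=F_{022}=:\nu$; it belongs to $\mathcal{F}_8\oplus\mathcal{F}_{10}$ iff $F$ is the sum of a tensor of the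 $\mathcal{F}_8$ form and a tensor of the $\mathcal{F}_{10}$ form, i.e. all $F_{ijk}$ vanish except possibly $F_{101}=F_{110}=F_{202}=F_{220}=\lambda$ and $F_{011}=F_{022}=\nu$. *)

theory Defs
  imports Complex_Main
begin

(* The Lie algebra l of L is identified with R^3 via the basis E_0,E_1,E_2:
   a vector is a function nat => real whose components 0,1,2 are used.
   C i j k = C_{ij}^k are the structure constants, [E_i,E_j] = sum_k C i j k E_k.
   Nb i j k = k-th component of nabla_{E_i} E_j (Levi-Civita connection on
   left-invariant fields). *)

definition basis_vec :: "nat \<Rightarrow> nat \<Rightarrow> real" where
  "basis_vec j = (\<lambda>k. if k = j then 1 else 0)"

definition sgn_g :: "nat \<Rightarrow> real" where
  "sgn_g k = (if k = 2 then -1 else 1)"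

definition gmet :: "(nat \<Rightarrow> real) \<Rightarrow> (nat \<Rightarrow> real) \<Rightarrow> real" where
  "gmet x y = x 0 * y 0 + x 1 * y 1 - x 2 * y 2"

definition lie_br :: "(nat \<Rightarrow> nat \<Rightarrow> nat \<Rightarrow> real) \<Rightarrow> (nat \<Rightarrow> real) \<Rightarrow> (nat \<Rightarrow> real) \<Rightarrow> (nat \<Rightarrow> real)" where
  "lie_br C x y = (\<lambda>k. \<Sum>i<3. \<Sum>j<3. x i * y j * C i j k)"

definition is_lie_structure :: "(nat \<Rightarrow> nat \<Rightarrow> nat \<Rightarrow> real) \<Rightarrow> bool" where
  "is_lie_structure C \<longleftrightarrow>
     (\<forall>i<3. \<forall>j<3. \<forall>k<3. C i j k = - C j i k) \<and>
     (\<forall>i<3. \<forall>j<3. \<forall>l<3. \<forall>m<3.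
        (\<Sum>k<3. C i j k * C k l m + C j l k * C k i m + C l i k * C k j m) = 0)"

definition phi :: "(nat \<Rightarrow> real) \<Rightarrow> (nat \<Rightarrow> real)" where
  "phi v = (\<lambda>k. if k = 1 then - v 2 else if k = 2 then v 1 else 0)"

definition nabla_vec :: "(nat \<Rightarrow> nat \<Rightarrow> nat \<Rightarrow> real) \<Rightarrow> nat \<Rightarrow> (nat \<Rightarrow> real) \<Rightarrow> (nat \<Rightarrow> real)" where
  "nabla_vec Nb i v = (\<lambda>k. \<Sum>j<3. v j * Nb i j k)"

(* Levi-Civita connection on left-invariant vector fields: torsion free and
   metric (for left-invariant fields g(Y,Z) is constant, so X g(Y,Z) = 0). *)
definition is_levi_civita ::
  "(nat \<Rightarrow> nat \<Rightarrow> nat \<Rightarrow> real) \<Rightarrow> (nat \<Rightarrow> nat \<Rightarrow> nat \<Rightarrow> real) \<Rightarrow> bool" where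
  "is_levi_civita C Nb \<longleftrightarrow>
     (\<forall>i<3. \<forall>j<3. \<forall>k<3. Nb i j k - Nb j i k = C i j k) \<and>
     (\<forall>i<3. \<forall>j<3. \<forall>k<3.
        gmet (nabla_vec Nb i (basis_vec j)) (basis_vec k)
        + gmet (basis_vec j) (nabla_vec Nb i (basis_vec k)) = 0)"

definition Fcomp :: "(nat \<Rightarrow> nat \<Rightarrow> nat \<Rightarrow> real) \<Rightarrow> nat \<Rightarrow> nat \<Rightarrow> nat \<Rightarrow> real" where
  "Fcomp Nb i j k =
     gmet (\<lambda>m. nabla_vec Nb i (phi (basis_vec j)) m - phi (nabla_vec Nb i (basis_vec j)) m)
          (basis_vec k)"

definition killing_metric :: "(nat \<Rightarrow> nat \<Rightarrow> nat \<Rightarrow> real) \<Rightarrow> bool" where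
  "killing_metric C \<longleftrightarrow>
     (\<forall>x y z. gmet (lie_br C x y) z = gmet x (lie_br C y z))"

definition F8_F10_form :: "(nat \<Rightarrow> nat \<Rightarrow> nat \<Rightarrow> real) \<Rightarrow> real \<Rightarrow> real \<Rightarrow> bool" where
  "F8_F10_form Nb lam nu \<longleftrightarrow>
     (\<forall>i<3. \<forall>j<3. \<forall>k<3. Fcomp Nb i j k =
        (if (i,j,k) \<in> {(1,0,1),(1,1,0),(2,0,2),(2,2,0)} then lam
         else if (i,j,k) \<in> {(0,1,1),(0,2,2)} then nu else 0))"

end

theory Submission
  imports Defs
begin

lemma all3: "(\<forall>i<(3::nat). P i) = (P 0 \<and> P 1 \<and> P 2)"
proof -
  have "{..<3::nat} = {0,1,2}" by auto
  then show ?thesis by (metis (no_types, lifting) insert_iff lessThan_iff singletonD)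
qed

lemma sum3: "(\<Sum>i<(3::nat). f i) = f 0 + f 1 + f 2"
proof -
  have "{..<3::nat} = {0,1,2}" by auto
  then show ?thesis by (simp add: add.assoc)
qed

lemma lt3: "(i::nat) < 3 \<Longrightarrow> i = 0 \<or> i = 1 \<or> i = 2" by auto

lemma gmet_e2: "k < 3 \<Longrightarrow> gmet v (basis_vec k) = v k * sgn_g k"
  by (drule lt3) (auto simp: gmet_def basis_vec_def sgn_g_def)

lemma gmet_e1: "k < 3 \<Longrightarrow> gmet (basis_vec k) v = v k * sgn_g k"
  by (drule lt3) (auto simp: gmet_def basis_vec_def sgn_g_def)

lemma nabla_e: "j < 3 \<Longrightarrow> nabla_vec Nb i (basis_vec j) = (\<lambda>k. Nb i j k)"
  by (drule lt3) (auto simp: nabla_vec_def basis_vec_def sum3)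

lemma lie_e: "i < 3 \<Longrightarrow> j < 3 \<Longrightarrow> lie_br C (basis_vec i) (basis_vec j) = (\<lambda>m. C i j m)"
  by (drule lt3, drule lt3) (auto simp: lie_br_def basis_vec_def sum3)

lemma sg2: "sgn_g k * sgn_g k = 1"
  by (simp add: sgn_g_def)

lemma Nb_formula:
  assumes "is_levi_civita C Nb" "i < 3" "j < 3" "k < 3"
  shows "Nb i j k = (C i j k * sgn_g k - C j k i * sgn_g i + C k i j * sgn_g j) * sgn_g k / 2"
proof -
  have T: "\<And>i j k. i<3 \<Longrightarrow> j<3 \<Longrightarrow> k<3 \<Longrightarrow> Nb i j k - Nb j i k = C i j k"
    using assms(1) unfolding is_levi_civita_def by blast
  have M0: "\<And>i j k. i<3 \<Longrightarrow> j<3 \<Longrightarrow> k<3 \<Longrightarrow>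
      gmet (nabla_vec Nb i (basis_vec j)) (basis_vec k)
        + gmet (basis_vec j) (nabla_vec Nb i (basis_vec k)) = 0"
    using assms(1) unfolding is_levi_civita_def by blast
  have M: "\<And>i j k. i<3 \<Longrightarrow> j<3 \<Longrightarrow> k<3 \<Longrightarrow>
      Nb i j k * sgn_g k + Nb i k j * sgn_g j = 0"
    using M0 by (simp add: gmet_e1 gmet_e2 nabla_e)
  define N where "N i j k = Nb i j k * sgn_g k" for i j k
  define c where "c i j k = C i j k * sgn_g k" for i j k
  have NA: "\<And>i j k. i<3 \<Longrightarrow> j<3 \<Longrightarrow> k<3 \<Longrightarrow> N i j k + N i k j = 0"
    using M by (simp add: N_def)
  have NT: "\<And>i j k. i<3 \<Longrightarrow> j<3 \<Longrightarrow> k<3 \<Longrightarrow> N i j k - N j i k = c i j k"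
    using T by (simp add: N_def c_def left_diff_distrib[symmetric])
  have "2 * N i j k = c i j k - c j k i + c k i j"
    using NA[of i j k] NA[of j i k] NA[of k j i] NT[of i j k] NT[of j k i] NT[of k i j] assms(2-4)
    by linarith
  then have "2 * Nb i j k * sgn_g k * sgn_g k = (c i j k - c j k i + c k i j) * sgn_g k"
    by (simp add: N_def)
  then show ?thesis by (simp add: sg2 c_def mult.assoc)
qed

lemma antis:
  assumes "is_lie_structure C" "i<3" "j<3" "k<3"
  shows "C j i k = - C i j k"
proof -
  have "\<forall>i<3. \<forall>j<3. \<forall>k<3. C i j k = - C j i k"
    using assms(1) unfolding is_lie_structure_def by blast
  then show ?thesis using assms(2-4) by blast
qed

theorem theorem2p2:
  fixes C Nb :: "nat \<Rightarrow> nat \<Rightarrow> nat \<Rightarrow> real"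
  assumes "is_lie_structure C"
    and "is_levi_civita C Nb"
  shows "(killing_metric C \<longleftrightarrow>
            (\<exists>lam nu. F8_F10_form Nb lam nu \<and> 2 * lam = - nu))
       \<and> (killing_metric C \<longleftrightarrow>
            (C 1 2 0 = - C 0 1 2 \<and> C 1 2 0 = - C 0 2 1 \<and>
             (\<forall>i j k. i < j \<and> j < 3 \<and> k < 3 \<and>
                (i,j,k) \<notin> {(1,2,0),(0,1,2),(0,2,1)} \<longrightarrow> C i j k = 0)))"
proof -
  have A: "\<And>i j k. i<3 \<Longrightarrow> j<3 \<Longrightarrow> k<3 \<Longrightarrow> C j i k = - C i j k"
    using antis[OF assms(1)] by blast
  have Cii: "\<And>k. k<3 \<Longrightarrow> C 0 0 k = 0" "\<And>k. k<3 \<Longrightarrow> C 1 1 k = 0" "\<And>k. k<3 \<Longrightarrow> C 2 2 k = 0"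
    using A[of 0 0] A[of 1 1] A[of 2 2] by fastforce+
  have Crev: "\<And>k. k<3 \<Longrightarrow> C 1 0 k = - C 0 1 k" "\<And>k. k<3 \<Longrightarrow> C 2 0 k = - C 0 2 k"
     "\<And>k. k<3 \<Longrightarrow> C 2 1 k = - C 1 2 k"
    by (rule A; simp)+
  have Crev2: "\<And>k. k<3 \<Longrightarrow> C (Suc 0) 0 k = - C 0 (Suc 0) k"
     "\<And>k. k<3 \<Longrightarrow> C 2 (Suc 0) k = - C (Suc 0) 2 k"
     "\<And>k. k<3 \<Longrightarrow> C (Suc 0) (Suc 0) k = 0"
    using Crev Cii by simp_all
  have Nb: "\<And>i j k. i<3 \<Longrightarrow> j<3 \<Longrightarrow> k<3 \<Longrightarrow>
     Nb i j k = (C i j k * sgn_g k - C j k i * sgn_g i + C k i j * sgn_g j) * sgn_g k / 2"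
    using Nb_formula[OF assms(2)] by blast
  define K where "K = (C 1 2 0 = - C 0 1 2 \<and> C 1 2 0 = - C 0 2 1 \<and>
             (\<forall>i j k. i < j \<and> j < 3 \<and> k < 3 \<and>
                (i,j,k) \<notin> {(1,2,0),(0,1,2),(0,2,1)} \<longrightarrow> C i j k = 0))"
  have Kexp: "K = (C 1 2 0 = - C 0 1 2 \<and> C 1 2 0 = - C 0 2 1 \<and>
      C 0 1 0 = 0 \<and> C 0 1 1 = 0 \<and> C 0 2 0 = 0 \<and> C 0 2 2 = 0 \<and> C 1 2 1 = 0 \<and> C 1 2 2 = 0)"
    unfolding K_def
    apply (rule iffI)
     apply (intro conjI; simp)
    apply (elim conjE)
    apply (intro conjI allI impI, assumption, assumption)
    apply (elim conjE)
    subgoal for i j k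
      apply (subgoal_tac "(i=0 \<and> j=1 \<or> i=0 \<and> j=2 \<or> i=1 \<and> j=2) \<and> (k=0 \<or> k=1 \<or> k=2)")
       apply (elim conjE disjE; simp)
      apply arith
      done
    done
  have F000: "Fcomp Nb 0 0 0 = 0"
    by (simp add: Fcomp_def phi_def gmet_def nabla_vec_def basis_vec_def sum3 Nb sgn_g_def Cii Crev Crev2; (simp add: field_simps)?)
  have F001: "Fcomp Nb 0 0 1 = (1) * C 0 2 0"
    by (simp add: Fcomp_def phi_def gmet_def nabla_vec_def basis_vec_def sum3 Nb sgn_g_def Cii Crev Crev2; (simp add: field_simps)?)
  have F002: "Fcomp Nb 0 0 2 = (-1) * C 0 1 0"
    by (simp add: Fcomp_def phi_def gmet_def nabla_vec_def basis_vec_def sum3 Nb sgn_g_def Cii Crev Crev2; (simp add: field_simps)?)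
  have F010: "Fcomp Nb 0 1 0 = (1) * C 0 2 0"
    by (simp add: Fcomp_def phi_def gmet_def nabla_vec_def basis_vec_def sum3 Nb sgn_g_def Cii Crev Crev2; (simp add: field_simps)?)
  have F011: "Fcomp Nb 0 1 1 = (1) * C 0 1 2 + (1) * C 0 2 1 + (1) * C 1 2 0"
    by (simp add: Fcomp_def phi_def gmet_def nabla_vec_def basis_vec_def sum3 Nb sgn_g_def Cii Crev Crev2; (simp add: field_simps)?)
  have F012: "Fcomp Nb 0 1 2 = 0"
    by (simp add: Fcomp_def phi_def gmet_def nabla_vec_def basis_vec_def sum3 Nb sgn_g_def Cii Crev Crev2; (simp add: field_simps)?)
  have F020: "Fcomp Nb 0 2 0 = (-1) * C 0 1 0"
    by (simp add: Fcomp_def phi_def gmet_def nabla_vec_def basis_vec_def sum3 Nb sgn_g_def Cii Crev Crev2; (simp add: field_simps)?)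
  have F021: "Fcomp Nb 0 2 1 = 0"
    by (simp add: Fcomp_def phi_def gmet_def nabla_vec_def basis_vec_def sum3 Nb sgn_g_def Cii Crev Crev2; (simp add: field_simps)?)
  have F022: "Fcomp Nb 0 2 2 = (1) * C 0 1 2 + (1) * C 0 2 1 + (1) * C 1 2 0"
    by (simp add: Fcomp_def phi_def gmet_def nabla_vec_def basis_vec_def sum3 Nb sgn_g_def Cii Crev Crev2; (simp add: field_simps)?)
  have F100: "Fcomp Nb 1 0 0 = 0"
    by (simp add: Fcomp_def phi_def gmet_def nabla_vec_def basis_vec_def sum3 Nb sgn_g_def Cii Crev Crev2; (simp add: field_simps)?)
  have F101: "Fcomp Nb 1 0 1 = (-1/2) * C 0 1 2 + (1/2) * C 0 2 1 + (1/2) * C 1 2 0"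
    by (simp add: Fcomp_def phi_def gmet_def nabla_vec_def basis_vec_def sum3 Nb sgn_g_def Cii Crev Crev2; (simp add: field_simps)?)
  have F102: "Fcomp Nb 1 0 2 = (-1) * C 0 1 1"
    by (simp add: Fcomp_def phi_def gmet_def nabla_vec_def basis_vec_def sum3 Nb sgn_g_def Cii Crev Crev2; (simp add: field_simps)?)
  have F110: "Fcomp Nb 1 1 0 = (-1/2) * C 0 1 2 + (1/2) * C 0 2 1 + (1/2) * C 1 2 0"
    by (simp add: Fcomp_def phi_def gmet_def nabla_vec_def basis_vec_def sum3 Nb sgn_g_def Cii Crev Crev2; (simp add: field_simps)?)
  have F111: "Fcomp Nb 1 1 1 = (2) * C 1 2 1"
    by (simp add: Fcomp_def phi_def gmet_def nabla_vec_def basis_vec_def sum3 Nb sgn_g_def Cii Crev Crev2; (simp add: field_simps)?)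
  have F112: "Fcomp Nb 1 1 2 = 0"
    by (simp add: Fcomp_def phi_def gmet_def nabla_vec_def basis_vec_def sum3 Nb sgn_g_def Cii Crev Crev2; (simp add: field_simps)?)
  have F120: "Fcomp Nb 1 2 0 = (-1) * C 0 1 1"
    by (simp add: Fcomp_def phi_def gmet_def nabla_vec_def basis_vec_def sum3 Nb sgn_g_def Cii Crev Crev2; (simp add: field_simps)?)
  have F121: "Fcomp Nb 1 2 1 = 0"
    by (simp add: Fcomp_def phi_def gmet_def nabla_vec_def basis_vec_def sum3 Nb sgn_g_def Cii Crev Crev2; (simp add: field_simps)?)
  have F122: "Fcomp Nb 1 2 2 = (2) * C 1 2 1"
    by (simp add: Fcomp_def phi_def gmet_def nabla_vec_def basis_vec_def sum3 Nb sgn_g_def Cii Crev Crev2; (simp add: field_simps)?)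
  have F200: "Fcomp Nb 2 0 0 = 0"
    by (simp add: Fcomp_def phi_def gmet_def nabla_vec_def basis_vec_def sum3 Nb sgn_g_def Cii Crev Crev2; (simp add: field_simps)?)
  have F201: "Fcomp Nb 2 0 1 = (-1) * C 0 2 2"
    by (simp add: Fcomp_def phi_def gmet_def nabla_vec_def basis_vec_def sum3 Nb sgn_g_def Cii Crev Crev2; (simp add: field_simps)?)
  have F202: "Fcomp Nb 2 0 2 = (1/2) * C 0 1 2 + (-1/2) * C 0 2 1 + (1/2) * C 1 2 0"
    by (simp add: Fcomp_def phi_def gmet_def nabla_vec_def basis_vec_def sum3 Nb sgn_g_def Cii Crev Crev2; (simp add: field_simps)?)
  have F210: "Fcomp Nb 2 1 0 = (-1) * C 0 2 2"
    by (simp add: Fcomp_def phi_def gmet_def nabla_vec_def basis_vec_def sum3 Nb sgn_g_def Cii Crev Crev2; (simp add: field_simps)?)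
  have F211: "Fcomp Nb 2 1 1 = (-2) * C 1 2 2"
    by (simp add: Fcomp_def phi_def gmet_def nabla_vec_def basis_vec_def sum3 Nb sgn_g_def Cii Crev Crev2; (simp add: field_simps)?)
  have F212: "Fcomp Nb 2 1 2 = 0"
    by (simp add: Fcomp_def phi_def gmet_def nabla_vec_def basis_vec_def sum3 Nb sgn_g_def Cii Crev Crev2; (simp add: field_simps)?)
  have F220: "Fcomp Nb 2 2 0 = (1/2) * C 0 1 2 + (-1/2) * C 0 2 1 + (1/2) * C 1 2 0"
    by (simp add: Fcomp_def phi_def gmet_def nabla_vec_def basis_vec_def sum3 Nb sgn_g_def Cii Crev Crev2; (simp add: field_simps)?)
  have F221: "Fcomp Nb 2 2 1 = 0"
    by (simp add: Fcomp_def phi_def gmet_def nabla_vec_def basis_vec_def sum3 Nb sgn_g_def Cii Crev Crev2; (simp add: field_simps)?)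
  have F222: "Fcomp Nb 2 2 2 = (-2) * C 1 2 2"
    by (simp add: Fcomp_def phi_def gmet_def nabla_vec_def basis_vec_def sum3 Nb sgn_g_def Cii Crev Crev2; (simp add: field_simps)?)
  have F: "(\<exists>lam nu. F8_F10_form Nb lam nu \<and> 2 * lam = - nu) = K"
    unfolding Kexp F8_F10_form_def all3
    apply (simp only: F000 F001 F002 F010 F011 F012 F020 F021 F022 F100 F101 F102 F110 F111 F112 F120 F121 F122 F200 F201 F202 F210 F211 F212 F220 F221 F222)
    apply (rule iffI)
    subgoal by (elim exE conjE; simp; linarith)
    subgoal
      apply (elim conjE)
      apply (rule exI[where x="C 1 2 0 / 2"])
      apply (rule exI[where x="- C 1 2 0"])
      apply simp
      done
    done
  have KK: "killing_metric C = K"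
  proof
    assume k: "killing_metric C"
    have B: "\<And>i j k. i<3 \<Longrightarrow> j<3 \<Longrightarrow> k<3 \<Longrightarrow> C i j k * sgn_g k = C j k i * sgn_g i"
    proof -
      fix i j k :: nat assume h: "i<3" "j<3" "k<3"
      have "gmet (lie_br C (basis_vec i) (basis_vec j)) (basis_vec k)
          = gmet (basis_vec i) (lie_br C (basis_vec j) (basis_vec k))"
        using k unfolding killing_metric_def by blast
      then show "C i j k * sgn_g k = C j k i * sgn_g i"
        using h by (simp add: lie_e gmet_e1 gmet_e2)
    qed
    show K unfolding Kexp
      using B[of 0 1 0] B[of 0 1 1] B[of 0 2 0] B[of 0 2 2] B[of 1 2 1] B[of 1 2 2]
        B[of 1 2 0] B[of 0 1 2] B[of 2 0 1] B[of 1 0 2]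
      by (simp add: sgn_g_def Cii Crev Crev2)
  next
    assume K
    then have k: "C 1 2 0 = - C 0 1 2" "C 1 2 0 = - C 0 2 1"
      "C 0 1 0 = 0" "C 0 1 1 = 0" "C 0 2 0 = 0" "C 0 2 2 = 0" "C 1 2 1 = 0" "C 1 2 2 = 0"
      unfolding Kexp by auto
    have CV: "C 0 0 0 = 0"
      "C 0 0 1 = 0"
      "C 0 0 2 = 0"
      "C 0 1 0 = 0"
      "C 0 1 1 = 0"
      "C 0 1 2 = - C 1 2 0"
      "C 0 2 0 = 0"
      "C 0 2 1 = - C 1 2 0"
      "C 0 2 2 = 0"
      "C 1 0 0 = 0"
      "C 1 0 1 = 0"
      "C 1 0 2 = C 1 2 0"
      "C 1 1 0 = 0"
      "C 1 1 1 = 0"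
      "C 1 1 2 = 0"
      "C 1 2 1 = 0"
      "C 1 2 2 = 0"
      "C 2 0 0 = 0"
      "C 2 0 1 = C 1 2 0"
      "C 2 0 2 = 0"
      "C 2 1 0 = - C 1 2 0"
      "C 2 1 1 = 0"
      "C 2 1 2 = 0"
      "C 2 2 0 = 0"
      "C 2 2 1 = 0"
      "C 2 2 2 = 0"
      using k Cii Crev by simp_all
    show "killing_metric C"
      unfolding killing_metric_def lie_br_def gmet_def sum3
      apply (simp only: CV)
      apply (simp add: algebra_simps)
      done
  qed
  show ?thesis using F KK K_def by simp
qed

end
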